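(* Let $A$ be a Lie conformal algebra, $M$ an $A$-module and $k\ge1$. If one of $a_1,\dots,a_k\in A$ is a torsion element of the $\mathbb F[\partial]$-module $A$, then $a_1\otimes\cdots\otimes a_k\otimes\phi=0$ in $\tilde\Gamma_k(A,M)$ for every $\phi$. In particular $\tilde\Gamma_k$ can be identified with the quotient of $\bar A^{\otimes k}\otimes\mathrm{Hom}(\mathbb F[\lambda_1,\dots,\lambda_k],M)$ by the relations (C1), (C2), where $\bar A=A/\mathrm{Tor}\,A$.
   Context: $\mathbb F$ field of characteristic 0; $A$ a Lie conformal algebra, $M$ an $A$-module (with $\partial$ acting on $M$ as $\partial^M$). $\mathrm{Hom}(\mathbb F[\lambda_1,\dots,\lambda_k],M)$ denotes the $\mathbb F$-linear maps. For $\phi$ in it, $\lambda_i^*\phi$ is $f\mapsto\phi(\lambda_if)$ and, for $\sigma\in S_k$, $\sigma^*\phi$ is $f(\lambda_1,\dots,\lambda_k)\mapsto\phi(f(\lambda_{\sigma(1)},\dots,\lambda_{\sigma(k)}))$. The space of basic $k$-chains $\tilde\Gamma_k(A,M)$ is the quotient of $A^{\otimes k}\otimes\mathrm{Hom}(\mathbb F[\lambda_1,\dots,\lambda_k],M)$ by the relations (C1) $a_1\otimes\cdots\otimes\partial a_i\otimes\cdots\otimes a_k\otimes\phi=-a_1\otimes\cdots\otimes a_k\otimes\lambda_i^*\phi$; (C2) $a_{\sigma(1)}\otimes\cdots\otimes a_{\sigma(k)}\otimes\sigma^*\phi=\mathrm{sign}(\sigma)\,a_1\otimes\cdots\otimes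 a_k\otimes\phi$ for all $\sigma\in S_k$. *)

theory Defs
  imports Main "HOL-Combinatorics.Permutations" "HOL-Computational_Algebra.Polynomial"
begin

text \<open>A Lie conformal algebra over the field 'f: an 'f-vector space A (scalar
multiplication sc) with a linear map D (= partial) and n-th products
pr a b n = a_(n) b, i.e. [a_lambda b] = sum_n lambda^n/n! a_(n) b.
The axioms are the coefficientwise form of sesquilinearity, skew-symmetry and
the Jacobi identity of the lambda-bracket.\<close>

definition is_lca ::
  "('f::field_char_0 \<Rightarrow> 'a::ab_group_add \<Rightarrow> 'a) \<Rightarrow> ('a \<Rightarrow> 'a) \<Rightarrow> ('a \<Rightarrow> 'a \<Rightarrow> nat \<Rightarrow> 'a) \<Rightarrow> bool"
where
  "is_lca sc D pr \<longleftrightarrow>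
     vector_space sc \<and> Vector_Spaces.linear sc sc D
   \<and> (\<forall>b n. Vector_Spaces.linear sc sc (\<lambda>a. pr a b n))
   \<and> (\<forall>a n. Vector_Spaces.linear sc sc (\<lambda>b. pr a b n))
   \<and> (\<forall>a b. \<exists>N. \<forall>n\<ge>N. pr a b n = 0)
   \<and> (\<forall>a b n. pr (D a) b n = - sc (of_nat n) (pr a b (n - 1)))
   \<and> (\<forall>a b n. pr a (D b) n = D (pr a b n) + sc (of_nat n) (pr a b (n - 1)))
   \<and> (\<forall>a b n N. (\<forall>j\<ge>N. pr b a j = 0) \<longrightarrow>
        pr a b n = - (\<Sum>j<N. sc ((-1)^(n+j) / fact j) ((D ^^ j) (pr b a (n+j)))))
   \<and> (\<forall>a b c m n. pr a (pr b c n) m - pr b (pr a c m) n =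
        (\<Sum>j\<le>m. sc (of_nat (m choose j)) (pr (pr a b j) c (m + n - j))))"

definition is_lca_module ::
  "('f::field_char_0 \<Rightarrow> 'a::ab_group_add \<Rightarrow> 'a) \<Rightarrow> ('a \<Rightarrow> 'a) \<Rightarrow> ('a \<Rightarrow> 'a \<Rightarrow> nat \<Rightarrow> 'a) \<Rightarrow>
   ('f \<Rightarrow> 'm::ab_group_add \<Rightarrow> 'm) \<Rightarrow> ('m \<Rightarrow> 'm) \<Rightarrow> ('a \<Rightarrow> 'm \<Rightarrow> nat \<Rightarrow> 'm) \<Rightarrow> bool"
where
  "is_lca_module sc D pr scM DM act \<longleftrightarrow>
     is_lca sc D pr \<and> vector_space scM \<and> Vector_Spaces.linear scM scM DM
   \<and> (\<forall>v n. Vector_Spaces.linear sc scM (\<lambda>a. act a v n))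
   \<and> (\<forall>a n. Vector_Spaces.linear scM scM (\<lambda>v. act a v n))
   \<and> (\<forall>a v. \<exists>N. \<forall>n\<ge>N. act a v n = 0)
   \<and> (\<forall>a v n. act (D a) v n = - scM (of_nat n) (act a v (n - 1)))
   \<and> (\<forall>a v n. act a (DM v) n = DM (act a v n) + scM (of_nat n) (act a v (n - 1)))
   \<and> (\<forall>a b v m n. act a (act b v n) m - act b (act a v m) n =
        (\<Sum>j\<le>m. scM (of_nat (m choose j)) (act (pr a b j) v (m + n - j))))"

definition op_eval :: "('f::field \<Rightarrow> 'a::ab_group_add \<Rightarrow> 'a) \<Rightarrow> ('a \<Rightarrow> 'a) \<Rightarrow> 'f poly \<Rightarrow> 'a \<Rightarrow> 'a" where
  "op_eval sc D p a = (\<Sum>i\<le>degree p. sc (coeff p i) ((D ^^ i) a))"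

definition is_torsion :: "('f::field \<Rightarrow> 'a::ab_group_add \<Rightarrow> 'a) \<Rightarrow> ('a \<Rightarrow> 'a) \<Rightarrow> 'a \<Rightarrow> bool" where
  "is_torsion sc D a \<longleftrightarrow> (\<exists>p. p \<noteq> 0 \<and> op_eval sc D p a = 0)"

text \<open>Quotient Abar = A / Tor A: elements are cosets a + Tor A, operations via
representatives.\<close>

definition tor_cls :: "('f::field \<Rightarrow> 'a::ab_group_add \<Rightarrow> 'a) \<Rightarrow> ('a \<Rightarrow> 'a) \<Rightarrow> 'a \<Rightarrow> 'a set" where
  "tor_cls sc D a = {b. is_torsion sc D (b - a)}"

definition bar_add where "bar_add sc D X Y = (\<Union>x\<in>X. \<Union>y\<in>Y. tor_cls sc D (x + y))"
definition bar_scale where "bar_scale sc D c X = (\<Union>x\<in>X. tor_cls sc D (sc c x))"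
definition bar_D where "bar_D sc D X = (\<Union>x\<in>X. tor_cls sc D (D x))"

text \<open>Hom(F[lambda_1..lambda_k], M) is encoded by the values on the monomial basis:
phi e = image of lambda_1^(e 0) * ... * lambda_k^(e (k-1)); exponent vectors are
e :: nat => nat with e j = 0 for j >= k, and phi is 0 on other e.
Generators of A^{tensor k} tensor Hom: pairs (as, phi) with length as = k.\<close>

definition hom_ok :: "nat \<Rightarrow> ((nat \<Rightarrow> nat) \<Rightarrow> 'm::zero) \<Rightarrow> bool" where
  "hom_ok k \<phi> \<longleftrightarrow> (\<forall>e. (\<exists>j\<ge>k. e j \<noteq> 0) \<longrightarrow> \<phi> e = 0)"

definition gen_dom :: "nat \<Rightarrow> 'b set \<Rightarrow> ('b list \<times> ((nat \<Rightarrow> nat) \<Rightarrow> 'm::zero)) set" where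
  "gen_dom k CA = {(as, \<phi>). length as = k \<and> set as \<subseteq> CA \<and> hom_ok k \<phi>}"

text \<open>lambda_i^* phi (0-based index i) and sigma^* phi on the monomial basis.\<close>
definition lam_pull :: "nat \<Rightarrow> ((nat \<Rightarrow> nat) \<Rightarrow> 'm) \<Rightarrow> ((nat \<Rightarrow> nat) \<Rightarrow> 'm)" where
  "lam_pull i \<phi> = (\<lambda>e. \<phi> (e(i := Suc (e i))))"

definition perm_pull :: "(nat \<Rightarrow> nat) \<Rightarrow> ((nat \<Rightarrow> nat) \<Rightarrow> 'm) \<Rightarrow> ((nat \<Rightarrow> nat) \<Rightarrow> 'm)" where
  "perm_pull \<sigma> \<phi> = (\<lambda>e. \<phi> (e \<circ> inv \<sigma>))"

definition perm_list :: "nat \<Rightarrow> (nat \<Rightarrow> nat) \<Rightarrow> 'b list \<Rightarrow> 'b list" where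
  "perm_list k \<sigma> as = map (\<lambda>i. as ! \<sigma> i) [0..<k]"

text \<open>Free F-vector space on the generators: finitely supported functions; basis vector:\<close>
definition gvec :: "'g \<Rightarrow> 'g \<Rightarrow> 'f::field" where
  "gvec g = (\<lambda>h. if h = g then 1 else 0)"

text \<open>Relations: multilinearity (tensor product over F) and (C1), (C2).
Parameters: number k, carrier CA of A, addition, scalar mult., partial of A,
scalar multiplication of M.\<close>
inductive_set chain_rels ::
  "nat \<Rightarrow> 'b set \<Rightarrow> ('b \<Rightarrow> 'b \<Rightarrow> 'b) \<Rightarrow> ('f::field \<Rightarrow> 'b \<Rightarrow> 'b) \<Rightarrow> ('b \<Rightarrow> 'b) \<Rightarrow>
   ('f \<Rightarrow> 'm::ab_group_add \<Rightarrow> 'm) \<Rightarrow> (('b list \<times> ((nat \<Rightarrow> nat) \<Rightarrow> 'm)) \<Rightarrow> 'f) set"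
  for k CA addA scA DA scM
where
  add_left: "\<lbrakk>(as, \<phi>) \<in> gen_dom k CA; i < k; x \<in> CA; y \<in> CA\<rbrakk> \<Longrightarrow>
     (\<lambda>h. gvec (as[i := addA x y], \<phi>) h - gvec (as[i := x], \<phi>) h - gvec (as[i := y], \<phi>) h)
       \<in> chain_rels k CA addA scA DA scM"
| scale_left: "\<lbrakk>(as, \<phi>) \<in> gen_dom k CA; i < k; x \<in> CA\<rbrakk> \<Longrightarrow>
     (\<lambda>h. gvec (as[i := scA c x], \<phi>) h - c * gvec (as[i := x], \<phi>) h)
       \<in> chain_rels k CA addA scA DA scM"
| add_right: "\<lbrakk>(as, \<phi>) \<in> gen_dom k CA; (as, \<psi>) \<in> gen_dom k CA\<rbrakk> \<Longrightarrow>
     (\<lambda>h. gvec (as, \<lambda>e. \<phi> e + \<psi> e) h - gvec (as, \<phi>) h - gvec (as, \<psi>) h)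
       \<in> chain_rels k CA addA scA DA scM"
| scale_right: "(as, \<phi>) \<in> gen_dom k CA \<Longrightarrow>
     (\<lambda>h. gvec (as, \<lambda>e. scM c (\<phi> e)) h - c * gvec (as, \<phi>) h)
       \<in> chain_rels k CA addA scA DA scM"
| C1: "\<lbrakk>(as, \<phi>) \<in> gen_dom k CA; i < k\<rbrakk> \<Longrightarrow>
     (\<lambda>h. gvec (as[i := DA (as ! i)], \<phi>) h + gvec (as, lam_pull i \<phi>) h)
       \<in> chain_rels k CA addA scA DA scM"
| C2: "\<lbrakk>(as, \<phi>) \<in> gen_dom k CA; \<sigma> permutes {..<k}\<rbrakk> \<Longrightarrow>
     (\<lambda>h. gvec (perm_list k \<sigma> as, perm_pull \<sigma> \<phi>) h - of_int (sign \<sigma>) * gvec (as, \<phi>) h)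
       \<in> chain_rels k CA addA scA DA scM"

text \<open>Linear span of the relations; x is zero in the quotient iff x is in the span.\<close>
inductive_set chain_span ::
  "nat \<Rightarrow> 'b set \<Rightarrow> ('b \<Rightarrow> 'b \<Rightarrow> 'b) \<Rightarrow> ('f::field \<Rightarrow> 'b \<Rightarrow> 'b) \<Rightarrow> ('b \<Rightarrow> 'b) \<Rightarrow>
   ('f \<Rightarrow> 'm::ab_group_add \<Rightarrow> 'm) \<Rightarrow> (('b list \<times> ((nat \<Rightarrow> nat) \<Rightarrow> 'm)) \<Rightarrow> 'f) set"
  for k CA addA scA DA scM
where
  zero: "(\<lambda>h. 0) \<in> chain_span k CA addA scA DA scM"
| step: "\<lbrakk>x \<in> chain_span k CA addA scA DA scM; r \<in> chain_rels k CA addA scA DA scM\<rbrakk> \<Longrightarrow>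
     (\<lambda>h. x h + c * r h) \<in> chain_span k CA addA scA DA scM"

definition free_elt :: "nat \<Rightarrow> 'b set \<Rightarrow> (('b list \<times> ((nat \<Rightarrow> nat) \<Rightarrow> 'm::zero)) \<Rightarrow> 'f::zero) \<Rightarrow> bool" where
  "free_elt k CA x \<longleftrightarrow> finite {g. x g \<noteq> 0} \<and> {g. x g \<noteq> 0} \<subseteq> gen_dom k CA"

text \<open>Linear map induced on generators by a_i |-> a_i + Tor A.\<close>
definition bar_proj :: "('f::field \<Rightarrow> 'a::ab_group_add \<Rightarrow> 'a) \<Rightarrow> ('a \<Rightarrow> 'a) \<Rightarrow>
   (('a list \<times> ((nat \<Rightarrow> nat) \<Rightarrow> 'm)) \<Rightarrow> 'f) \<Rightarrow> (('a set list \<times> ((nat \<Rightarrow> nat) \<Rightarrow> 'm)) \<Rightarrow> 'f)" where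
  "bar_proj sc D x = (\<lambda>(bs, \<phi>). \<Sum>g\<in>{g. x g \<noteq> 0 \<and> map (tor_cls sc D) (fst g) = bs \<and> snd g = \<phi>}. x g)"

end

theory Submission
  imports Defs
begin


locale tset =
  fixes sc :: "'f::field \<Rightarrow> 'a::ab_group_add \<Rightarrow> 'a" and D :: "'a \<Rightarrow> 'a"
  assumes vs: "vector_space sc" and lin: "Vector_Spaces.linear sc sc D"
begin

sublocale vector_space sc by (rule vs)

lemma D_add: "D (x + y) = D x + D y" and D_sc: "D (sc c x) = sc c (D x)"
  using lin unfolding Vector_Spaces.linear_iff by auto

lemma Dn_add: "(D ^^ n) (x + y) = (D ^^ n) x + (D ^^ n) y"
  by (induction n) (auto simp: D_add)
lemma Dn_sc: "(D ^^ n) (sc c x) = sc c ((D ^^ n) x)"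
  by (induction n) (auto simp: D_sc)
lemma D_zero: "D 0 = 0"
  using D_sc[of 0 0] by simp
lemma Dn_zero: "(D ^^ n) 0 = 0"
  by (induction n) (auto simp: D_zero)
lemma Dn_neg: "(D ^^ n) (- x) = - (D ^^ n) x"
  using Dn_add[of n x "-x"] Dn_zero[of n] by (simp add: eq_neg_iff_add_eq_0 add.commute)
lemma Dn_D: "(D ^^ n) (D x) = D ((D ^^ n) x)"
  by (metis comp_apply funpow_Suc_right funpow.simps(2))

lemma op_eval_ext:
  assumes "degree p \<le> N"
  shows "op_eval sc D p a = (\<Sum>i\<le>N. sc (coeff p i) ((D ^^ i) a))"
  unfolding op_eval_def
  by (rule sum.mono_neutral_left) (use assms in \<open>auto simp: coeff_eq_0\<close>)

lemma op_eval_add: "op_eval sc D (p + q) a = op_eval sc D p a + op_eval sc D q a"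
proof -
  let ?N = "max (degree p) (degree q)"
  have "degree (p + q) \<le> ?N" by (rule degree_add_le) auto
  then show ?thesis
    by (simp add: op_eval_ext[of _ ?N] sum.distrib scale_left_distrib)
qed

lemma op_eval_smult: "op_eval sc D (smult c p) a = sc c (op_eval sc D p a)"
proof -
  have "degree (smult c p) \<le> degree p" by (rule degree_smult_le)
  then show ?thesis
    by (simp add: op_eval_ext[of _ "degree p"] scale_sum_right op_eval_def)
qed

lemma op_eval_zero: "op_eval sc D 0 a = 0"
  by (simp add: op_eval_def)

lemma op_eval_arg_add: "op_eval sc D p (x + y) = op_eval sc D p x + op_eval sc D p y"
  by (simp add: op_eval_def Dn_add sum.distrib scale_right_distrib)
lemma op_eval_arg_sc: "op_eval sc D p (sc c x) = sc c (op_eval sc D p x)"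
  by (simp add: op_eval_def Dn_sc scale_sum_right mult.commute)
lemma op_eval_arg_zero: "op_eval sc D p 0 = 0"
  by (simp add: op_eval_def Dn_zero)
lemma op_eval_arg_neg: "op_eval sc D p (- x) = - op_eval sc D p x"
  by (simp add: op_eval_def Dn_neg sum_negf)
lemma op_eval_arg_D: "op_eval sc D p (D x) = D (op_eval sc D p x)"
proof -
  interpret Vector_Spaces.linear sc sc D by (rule lin)
  show ?thesis by (simp add: op_eval_def Dn_D sum D_sc)
qed

lemma op_eval_pCons0: "op_eval sc D (pCons 0 r) a = op_eval sc D r (D a)"
proof -
  have "degree (pCons 0 r) \<le> Suc (degree r)" by (simp add: degree_pCons_le)
  then have "op_eval sc D (pCons 0 r) a = (\<Sum>i\<le>Suc (degree r). sc (coeff (pCons 0 r) i) ((D ^^ i) a))"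
    by (rule op_eval_ext)
  also have "\<dots> = (\<Sum>i\<le>degree r. sc (coeff r i) ((D ^^ i) (D a)))"
    by (simp only: sum.atMost_Suc_shift) (simp add: funpow_Suc_right del: funpow.simps)
  finally show ?thesis by (simp add: op_eval_def)
qed

lemma op_eval_const: "op_eval sc D [:c:] a = sc c a"
  by (simp add: op_eval_def)

lemma op_eval_pCons: "op_eval sc D (pCons c p) a = sc c a + op_eval sc D p (D a)"
proof -
  have "pCons c p = [:c:] + pCons 0 p" by simp
  then show ?thesis by (simp only: op_eval_add op_eval_const op_eval_pCons0)
qed

lemma op_eval_mult: "op_eval sc D (p * q) a = op_eval sc D p (op_eval sc D q a)"
proof (induction p arbitrary: a rule: pCons_induct)
  case 0
  then show ?case by (simp add: op_eval_zero)
next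
  case (pCons c p)
  have "op_eval sc D (pCons c p * q) a = sc c (op_eval sc D q a) + op_eval sc D (p * q) (D a)"
    by (simp add: op_eval_add op_eval_smult op_eval_pCons0)
  also have "\<dots> = op_eval sc D (pCons c p) (op_eval sc D q a)"
    by (simp add: pCons.IH op_eval_pCons op_eval_arg_D)
  finally show ?case .
qed

lemma tor_zero: "is_torsion sc D 0"
  unfolding is_torsion_def by (rule exI[of _ 1]) (simp add: op_eval_arg_zero)

lemma tor_add: "is_torsion sc D x \<Longrightarrow> is_torsion sc D y \<Longrightarrow> is_torsion sc D (x + y)"
proof -
  assume "is_torsion sc D x" "is_torsion sc D y"
  then obtain p q where p: "p \<noteq> 0" "op_eval sc D p x = 0" and q: "q \<noteq> 0" "op_eval sc D q y = 0"
    unfolding is_torsion_def by blast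
  have "op_eval sc D (p * q) (x + y) = 0"
    using p q by (simp add: op_eval_arg_add op_eval_mult op_eval_arg_zero)
      (metis mult.commute op_eval_mult op_eval_arg_zero)
  then show ?thesis unfolding is_torsion_def using p q by (intro exI[of _ "p*q"]) simp
qed

lemma tor_neg: "is_torsion sc D x \<Longrightarrow> is_torsion sc D (- x)"
  unfolding is_torsion_def by (auto simp: op_eval_arg_neg)
lemma tor_diff: "is_torsion sc D x \<Longrightarrow> is_torsion sc D y \<Longrightarrow> is_torsion sc D (x - y)"
  using tor_add[of x "-y"] tor_neg[of y] by simp
lemma tor_sc: "is_torsion sc D x \<Longrightarrow> is_torsion sc D (sc c x)"
  unfolding is_torsion_def by (auto simp: op_eval_arg_sc)
lemma tor_D: "is_torsion sc D x \<Longrightarrow> is_torsion sc D (D x)"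
  unfolding is_torsion_def by (auto simp: op_eval_arg_D D_zero)

end

function solve :: "('f::field \<Rightarrow> 'm::ab_group_add \<Rightarrow> 'm) \<Rightarrow> (nat \<Rightarrow> 'f) \<Rightarrow> nat \<Rightarrow> ((nat\<Rightarrow>nat)\<Rightarrow>'m) \<Rightarrow> nat \<Rightarrow> nat \<Rightarrow> (nat\<Rightarrow>nat) \<Rightarrow> 'm" where
 "solve scM b d \<phi> i n e = (if n < d then 0 else scM (inverse (b d)) (\<phi> (e(i := n - d)) - (\<Sum>j<d. scM (b j) (solve scM b d \<phi> i (n - d + j) e))))"
  by pat_completeness auto
termination by (relation "measure (\<lambda>(scM,b,d,\<phi>,i,n,e). n)") auto

declare solve.simps[simp del]

lemma solve_upd: "solve scM b d \<phi> i n (e(i := m)) = solve scM b d \<phi> i n e"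
proof (induction n rule: less_induct)
  case (less n)
  show ?case
  proof (cases "n < d")
    case True then show ?thesis by (simp add: solve.simps[of _ _ _ _ _ n])
  next
    case False
    have *: "\<And>j. j < d \<Longrightarrow> solve scM b d \<phi> i (n + j - d) (e(i := m)) = solve scM b d \<phi> i (n + j - d) e"
      using less False unfolding fun_upd_def by simp
    show ?thesis using False
      by (subst (1 2) solve.simps) (auto intro!: sum.cong simp: *)
  qed
qed

lemma solve_hom_ok:
  assumes "hom_ok k \<phi>" "i < k" "j0 \<ge> k" "e j0 \<noteq> 0" "vector_space scM"
  shows "solve scM b d \<phi> i n e = 0"
proof (induction n rule: less_induct)
  case (less n)
  have "(e(i := n - d)) j0 \<noteq> 0" using assms by auto
  then have 1: "\<phi> (e(i := n - d)) = 0"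
    using assms(1,3) unfolding hom_ok_def by blast
  show ?case
  proof (cases "n < d")
    case True then show ?thesis by (simp add: solve.simps[of _ _ _ _ _ n])
  next
    case False
    have *: "\<And>j. j < d \<Longrightarrow> solve scM b d \<phi> i (n + j - d) e = 0"
      using less False by simp
    interpret M: vector_space scM by fact
    show ?thesis using False
      by (subst solve.simps) (auto simp: * 1)
  qed
qed


lemma solve_eq:
  assumes "vector_space scM" "b d \<noteq> 0"
  shows "(\<Sum>j\<le>d. scM (b j) (solve scM b d \<phi> i (n + j) e)) = \<phi> (e(i := n))"
proof -
  interpret M: vector_space scM by fact
  let ?v = "\<phi> (e(i := n)) - (\<Sum>j<d. scM (b j) (solve scM b d \<phi> i (n + j) e))"
  have 1: "solve scM b d \<phi> i (n + d) e = scM (inverse (b d)) ?v"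
    by (subst solve.simps) simp
  have "(\<Sum>j\<le>d. scM (b j) (solve scM b d \<phi> i (n + j) e))
      = (\<Sum>j<d. scM (b j) (solve scM b d \<phi> i (n + j) e)) + scM (b d) (solve scM b d \<phi> i (n + d) e)"
    by (simp add: lessThan_Suc_atMost[symmetric])
  also have "scM (b d) (solve scM b d \<phi> i (n + d) e) = ?v"
    using assms(2) by (simp add: 1)
  finally show ?thesis by simp
qed

lemma lam_pow: "(lam_pull i ^^ j) \<psi> e = \<psi> (e(i := e i + j))"
  by (induction j arbitrary: e) (simp_all add: lam_pull_def)

lemma hom_ok_lam: "hom_ok k \<phi> \<Longrightarrow> i < k \<Longrightarrow> hom_ok k (lam_pull i \<phi>)"
  unfolding hom_ok_def lam_pull_def
  by (metis fun_upd_other not_le)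

lemma exists_psi:
  assumes "vector_space scM" "b d \<noteq> 0" "hom_ok k \<phi>" "i < k"
  shows "\<exists>\<psi>. hom_ok k \<psi> \<and> (\<forall>e. (\<Sum>j\<le>d. scM (b j) ((lam_pull i ^^ j) \<psi> e)) = \<phi> e)"
proof (intro exI conjI allI)
  let ?psi = "\<lambda>e. solve scM b d \<phi> i (e i) e"
  show "hom_ok k ?psi"
    unfolding hom_ok_def using solve_hom_ok[OF assms(3,4) _ _ assms(1)] by blast
  fix e
  have "(\<Sum>j\<le>d. scM (b j) ((lam_pull i ^^ j) ?psi e)) = (\<Sum>j\<le>d. scM (b j) (solve scM b d \<phi> i (e i + j) e))"
    by (simp add: lam_pow solve_upd)
  also have "\<dots> = \<phi> e" using solve_eq[of scM b d \<phi> i "e i" e, OF assms(1,2)] by simp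
  finally show "(\<Sum>j\<le>d. scM (b j) ((lam_pull i ^^ j) ?psi e)) = \<phi> e" .
qed

lemma cs_add:
  assumes "x \<in> chain_span k CA addA scA DA scM" "y \<in> chain_span k CA addA scA DA scM"
  shows "(\<lambda>h. x h + c * y h) \<in> chain_span k CA addA scA DA scM"
  using assms(2)
proof (induction arbitrary: c)
  case zero
  then show ?case using assms(1) by simp
next
  case (step y r d)
  have "(\<lambda>h. (x h + c * y h) + (c * d) * r h) \<in> chain_span k CA addA scA DA scM"
    by (rule chain_span.step[OF step.IH step.hyps(2)])
  moreover have "(\<lambda>h. (x h + c * y h) + (c * d) * r h) = (\<lambda>h. x h + c * (y h + d * r h))"
    by (simp add: algebra_simps)
  ultimately show ?case by simp
qed

lemma cs_rel: "r \<in> chain_rels k CA addA scA DA scM \<Longrightarrow> r \<in> chain_span k CA addA scA DA scM"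
  using chain_span.step[OF chain_span.zero, of r k CA addA scA DA scM 1] by simp

lemma cs_sub:
  assumes "x \<in> chain_span k CA addA scA DA scM" "y \<in> chain_span k CA addA scA DA scM"
  shows "(\<lambda>h. x h - y h) \<in> chain_span k CA addA scA DA scM"
  using cs_add[OF assms, of "-1"] by simp

lemma cs_scale:
  assumes "y \<in> chain_span k CA addA scA DA scM"
  shows "(\<lambda>h. c * y h) \<in> chain_span k CA addA scA DA scM"
  using cs_add[OF chain_span.zero assms, of c] by simp

lemma cs_plus:
  assumes "x \<in> chain_span k CA addA scA DA scM" "y \<in> chain_span k CA addA scA DA scM"
  shows "(\<lambda>h. x h + y h) \<in> chain_span k CA addA scA DA scM"
  using cs_add[OF assms, of 1] by simp

lemma cs_sum:
  assumes "finite J" "\<And>j. j \<in> J \<Longrightarrow> f j \<in> chain_span k CA addA scA DA scM"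
  shows "(\<lambda>h. \<Sum>j\<in>J. c j * f j h) \<in> chain_span k CA addA scA DA scM"
  using assms
proof (induction J rule: finite_induct)
  case empty
  then show ?case using chain_span.zero by simp
next
  case (insert j J)
  then show ?case using cs_add[of "\<lambda>h. \<Sum>j\<in>J. c j * f j h" k CA addA scA DA scM "f j" "c j"]
    by (simp add: add.commute)
qed

lemma cs_eq: "x \<in> chain_span k CA addA scA DA scM \<Longrightarrow> x = y \<Longrightarrow> y \<in> chain_span k CA addA scA DA scM"
  by simp


lemma lin1: "(g::'f::field) + a + -1 * (a - s * b) = g - (-1 * s) * b" by algebra
lemma lin3: "(a::'f::field) - b - c + (b - d) + (c - e) = a - (d + e)" by algebra
lemma lin4: "((s::'f::field) - q) - (t - p - q) - (p - a) = (a + s) - t" by algebra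

lemma hom_ok_zero: "hom_ok k (\<lambda>e. 0)" by (simp add: hom_ok_def)



locale cset = tset sc D for sc :: "'f::field \<Rightarrow> 'a::ab_group_add \<Rightarrow> 'a" and D +
  fixes scM :: "'f \<Rightarrow> 'm::ab_group_add \<Rightarrow> 'm" and k :: nat
  assumes vsM: "vector_space scM"
begin

sublocale M: vector_space scM by (rule vsM)

abbreviation "S \<equiv> chain_span k UNIV (+) sc D scM"

lemma hom_ok_scM: "hom_ok k \<phi> \<Longrightarrow> hom_ok k (\<lambda>e. scM c (\<phi> e))"
  by (simp add: hom_ok_def)
lemma hom_ok_add:
  fixes \<phi> \<psi> :: "(nat \<Rightarrow> nat) \<Rightarrow> 'm"
  assumes "hom_ok k \<phi>" "hom_ok k \<psi>" shows "hom_ok k (\<lambda>e. \<phi> e + \<psi> e)"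
  unfolding hom_ok_def
proof (intro allI impI)
  fix e :: "nat \<Rightarrow> nat" assume "\<exists>j\<ge>k. e j \<noteq> 0"
  then have "\<phi> e = 0" "\<psi> e = 0" using assms unfolding hom_ok_def by blast+
  then show "\<phi> e + \<psi> e = 0" by simp
qed
lemma hom_ok_sum: "finite J \<Longrightarrow> (\<And>j. j \<in> J \<Longrightarrow> hom_ok k (\<psi> j)) \<Longrightarrow> hom_ok k (\<lambda>e. \<Sum>j\<in>J. scM (c j) (\<psi> j e))"
  by (simp add: hom_ok_def)

lemma stepA:
  assumes "length as = k" "hom_ok k \<psi>" "i < k"
  shows "(\<lambda>h. gvec (as[i := (D^^j) (as!i)], \<psi>) h - (-1)^j * gvec (as, (lam_pull i ^^ j) \<psi>) h) \<in> S"
  using assms(2)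
proof (induction j arbitrary: \<psi>)
  case 0
  show ?case by (rule cs_eq[OF chain_span.zero]) simp
next
  case (Suc j)
  let ?as' = "as[i := (D^^j) (as!i)]"
  have r: "(\<lambda>h. gvec (?as'[i := D (?as'!i)], \<psi>) h + gvec (?as', lam_pull i \<psi>) h) \<in> S"
    by (rule cs_rel, rule chain_rels.C1[where addA="(+)" and scA=sc and DA=D and scM=scM and CA=UNIV]) (auto simp: gen_dom_def assms Suc.prems)
  have ih: "(\<lambda>h. gvec (?as', lam_pull i \<psi>) h - (-1)^j * gvec (as, (lam_pull i ^^ j) (lam_pull i \<psi>)) h) \<in> S"
    by (rule Suc.IH[OF hom_ok_lam[OF Suc.prems assms(3)]])
  have e1: "?as'[i := D (?as'!i)] = as[i := (D^^Suc j) (as!i)]"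
    using assms by simp
  have e1': "as[i := (D^^j) (as!i), i := D (as[i := (D^^j) (as!i)] ! i)] = as[i := (D^^Suc j) (as!i)]"
    using assms by simp
  have e2: "(lam_pull i ^^ j) (lam_pull i \<psi>) = (lam_pull i ^^ Suc j) \<psi>"
    by (simp add: funpow_Suc_right del: funpow.simps)
  have X: "(\<lambda>h. gvec (?as'[i := D (?as'!i)], \<psi>) h + gvec (?as', lam_pull i \<psi>) h
     + -1 * (gvec (?as', lam_pull i \<psi>) h - (-1)^j * gvec (as, (lam_pull i ^^ j) (lam_pull i \<psi>)) h)) \<in> S"
    by (rule cs_add[OF r ih])
  show ?case
    using X by (simp only: e1 e2 power_Suc lin1)
qed

lemma stepB:
  assumes "length as = k" "hom_ok k \<psi>" "i < k" "finite J"
  shows "(\<lambda>h. gvec (as[i := \<Sum>j\<in>J. sc (c j) (v j)], \<psi>) h - (\<Sum>j\<in>J. c j * gvec (as[i := v j], \<psi>) h)) \<in> S"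
  using assms(4)
proof (induction J rule: finite_induct)
  case empty
  have "(\<lambda>h. gvec (as[i := sc 0 0], \<psi>) h - 0 * gvec (as[i := 0], \<psi>) h) \<in> S"
    by (rule cs_rel, rule chain_rels.scale_left[where addA="(+)" and scA=sc and DA=D and scM=scM and CA=UNIV]) (auto simp: gen_dom_def assms)
  then show ?case by simp
next
  case (insert j J)
  let ?x = "sc (c j) (v j)" and ?y = "\<Sum>j\<in>J. sc (c j) (v j)"
  have r1: "(\<lambda>h. gvec (as[i := ?x + ?y], \<psi>) h - gvec (as[i := ?x], \<psi>) h - gvec (as[i := ?y], \<psi>) h) \<in> S"
    by (rule cs_rel, rule chain_rels.add_left[where addA="(+)" and scA=sc and DA=D and scM=scM and CA=UNIV]) (auto simp: gen_dom_def assms)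
  have r2: "(\<lambda>h. gvec (as[i := sc (c j) (v j)], \<psi>) h - c j * gvec (as[i := v j], \<psi>) h) \<in> S"
    by (rule cs_rel, rule chain_rels.scale_left[where addA="(+)" and scA=sc and DA=D and scM=scM and CA=UNIV]) (auto simp: gen_dom_def assms)
  have X: "(\<lambda>h. gvec (as[i := ?x + ?y], \<psi>) h - gvec (as[i := ?x], \<psi>) h - gvec (as[i := ?y], \<psi>) h
     + (gvec (as[i := sc (c j) (v j)], \<psi>) h - c j * gvec (as[i := v j], \<psi>) h)
     + (gvec (as[i := ?y], \<psi>) h - (\<Sum>j\<in>J. c j * gvec (as[i := v j], \<psi>) h))) \<in> S"
    by (rule cs_plus[OF cs_plus[OF r1 r2] insert.IH])
  show ?case
    using X by (simp only: sum.insert[OF insert.hyps] lin3)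
qed

lemma stepC:
  assumes "length as = k" "finite J" "\<And>j. j \<in> J \<Longrightarrow> hom_ok k (\<psi> j)"
  shows "(\<lambda>h. (\<Sum>j\<in>J. c j * gvec (as, \<psi> j) h) - gvec (as, \<lambda>e. \<Sum>j\<in>J. scM (c j) (\<psi> j e)) h) \<in> S"
  using assms(2,3)
proof (induction J rule: finite_induct)
  case empty
  have "(\<lambda>h. gvec (as, \<lambda>e. scM 0 ((\<lambda>e. 0) e)) h - 0 * gvec (as, \<lambda>e. 0) h) \<in> S"
    by (rule cs_rel, rule chain_rels.scale_right[where addA="(+)" and scA=sc and DA=D and scM=scM and CA=UNIV]) (auto simp: gen_dom_def assms hom_ok_zero)
  from cs_scale[OF this, of "-1"] show ?case by simp
next
  case (insert j J)
  let ?p = "\<lambda>e. scM (c j) (\<psi> j e)" and ?q = "\<lambda>e. \<Sum>j\<in>J. scM (c j) (\<psi> j e)"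
  have hj: "hom_ok k (\<psi> j)" using insert by simp
  have hq: "hom_ok k ?q" using insert by (intro hom_ok_sum) auto
  have r1: "(\<lambda>h. gvec (as, \<lambda>e. ?p e + ?q e) h - gvec (as, ?p) h - gvec (as, ?q) h) \<in> S"
    by (rule cs_rel, rule chain_rels.add_right[where addA="(+)" and scA=sc and DA=D and scM=scM and CA=UNIV]) (auto simp: gen_dom_def assms hom_ok_scM hj hq)
  have r2: "(\<lambda>h. gvec (as, \<lambda>e. scM (c j) (\<psi> j e)) h - c j * gvec (as, \<psi> j) h) \<in> S"
    by (rule cs_rel, rule chain_rels.scale_right[where addA="(+)" and scA=sc and DA=D and scM=scM and CA=UNIV]) (auto simp: gen_dom_def assms hj)
  have ih: "(\<lambda>h. (\<Sum>j\<in>J. c j * gvec (as, \<psi> j) h) - gvec (as, ?q) h) \<in> S"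
    by (rule insert.IH) (use insert.prems in auto)
  have X: "(\<lambda>h. ((\<Sum>j\<in>J. c j * gvec (as, \<psi> j) h) - gvec (as, ?q) h)
      - (gvec (as, \<lambda>e. ?p e + ?q e) h - gvec (as, ?p) h - gvec (as, ?q) h)
      - (gvec (as, \<lambda>e. scM (c j) (\<psi> j e)) h - c j * gvec (as, \<psi> j) h)) \<in> S"
    by (rule cs_sub[OF cs_sub[OF ih r1] r2])
  show ?case
    using X by (simp only: sum.insert[OF insert.hyps] lin4)
qed


lemma hom_ok_lampow: "hom_ok k \<psi> \<Longrightarrow> i < k \<Longrightarrow> hom_ok k ((lam_pull i ^^ j) \<psi>)"
  by (induction j) (auto intro: hom_ok_lam)

lemma part1:
  assumes "length as = k" "hom_ok k \<phi>" "i < k" "is_torsion sc D (as!i)"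
  shows "gvec (as, \<phi>) \<in> S"
proof -
  obtain p where p: "p \<noteq> 0" "op_eval sc D p (as!i) = 0"
    using assms(4) unfolding is_torsion_def by blast
  define d where "d = degree p"
  define b where "b j = (-1)^j * coeff p j" for j
  have bd: "b d \<noteq> 0" using p(1) by (simp add: b_def d_def)
  obtain \<psi> where psi: "hom_ok k \<psi>" "\<And>e. (\<Sum>j\<le>d. scM (b j) ((lam_pull i ^^ j) \<psi> e)) = \<phi> e"
    using exists_psi[of scM b d k \<phi> i, OF vsM bd assms(2,3)] by blast
  have B: "(\<lambda>h. gvec (as[i := \<Sum>j\<le>d. sc (coeff p j) ((D^^j) (as!i))], \<psi>) h
     - (\<Sum>j\<le>d. coeff p j * gvec (as[i := (D^^j) (as!i)], \<psi>) h)) \<in> S"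
    by (rule stepB[OF assms(1) psi(1) assms(3)]) simp
  have eq0: "(\<Sum>j\<le>d. sc (coeff p j) ((D^^j) (as!i))) = 0"
    using p(2) by (simp add: op_eval_def d_def)
  have Z: "gvec (as[i := 0], \<psi>) \<in> S"
    using stepB[OF assms(1) psi(1) assms(3), of "{}"] by simp
  have X1: "(\<lambda>h. \<Sum>j\<le>d. coeff p j * gvec (as[i := (D^^j) (as!i)], \<psi>) h) \<in> S"
    by (rule cs_eq[OF cs_sub[OF Z B]]) (simp add: eq0)
  have A: "(\<lambda>h. \<Sum>j\<le>d. coeff p j * (gvec (as[i := (D^^j) (as!i)], \<psi>) h - (-1)^j * gvec (as, (lam_pull i ^^ j) \<psi>) h)) \<in> S"
    by (rule cs_sum) (auto intro: stepA[OF assms(1) psi(1) assms(3)])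
  have X2: "(\<lambda>h. \<Sum>j\<le>d. b j * gvec (as, (lam_pull i ^^ j) \<psi>) h) \<in> S"
    by (rule cs_eq[OF cs_sub[OF X1 A]]) (rule ext, simp add: b_def algebra_simps sum_subtractf)
  have C: "(\<lambda>h. (\<Sum>j\<le>d. b j * gvec (as, (lam_pull i ^^ j) \<psi>) h) - gvec (as, \<lambda>e. \<Sum>j\<le>d. scM (b j) ((lam_pull i ^^ j) \<psi> e)) h) \<in> S"
    by (rule stepC[OF assms(1)]) (auto intro: hom_ok_lampow[OF psi(1) assms(3)])
  have "(\<lambda>e. \<Sum>j\<le>d. scM (b j) ((lam_pull i ^^ j) \<psi> e)) = \<phi>" using psi(2) by auto
  then show ?thesis
    by - (rule cs_eq[OF cs_sub[OF X2 C]], simp)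
qed

end


definition barg :: "('f::field \<Rightarrow> 'a::ab_group_add \<Rightarrow> 'a) \<Rightarrow> ('a \<Rightarrow> 'a) \<Rightarrow> ('a list \<times> 'p) \<Rightarrow> ('a set list \<times> 'p)" where
  "barg sc D g = (map (tor_cls sc D) (fst g), snd g)"

abbreviation "supp x \<equiv> {g. x g \<noteq> 0}"

lemma bp_formula: "bar_proj sc D x b = sum x {g. x g \<noteq> 0 \<and> barg sc D g = b}"
proof -
  obtain bs \<phi> where b: "b = (bs, \<phi>)" by (cases b)
  have "{g. x g \<noteq> 0 \<and> map (tor_cls sc D) (fst g) = bs \<and> snd g = \<phi>} = {g. x g \<noteq> 0 \<and> barg sc D g = b}"
    by (auto simp: barg_def b)
  then show ?thesis by (simp add: bar_proj_def b)
qed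

lemma bp_F:
  assumes "finite F" "supp x \<subseteq> F"
  shows "bar_proj sc D x b = (\<Sum>g\<in>{g\<in>F. barg sc D g = b}. x g)"
  unfolding bp_formula
  by (rule sum.mono_neutral_left) (use assms in auto)

lemma bp_lin:
  assumes "finite (supp x)" "finite (supp y)"
  shows "bar_proj sc D (\<lambda>h. x h + c * y h) = (\<lambda>b. bar_proj sc D x b + c * bar_proj sc D y b)"
proof
  fix b
  let ?F = "supp x \<union> supp y"
  have f: "finite ?F" using assms by simp
  have 1: "bar_proj sc D (\<lambda>h. x h + c * y h) b = (\<Sum>g\<in>{g\<in>?F. barg sc D g = b}. x g + c * y g)"
    by (rule bp_F[OF f]) auto
  have 2: "bar_proj sc D x b = (\<Sum>g\<in>{g\<in>?F. barg sc D g = b}. x g)"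
    by (rule bp_F[OF f]) auto
  have 3: "bar_proj sc D y b = (\<Sum>g\<in>{g\<in>?F. barg sc D g = b}. y g)"
    by (rule bp_F[OF f]) auto
  show "bar_proj sc D (\<lambda>h. x h + c * y h) b = bar_proj sc D x b + c * bar_proj sc D y b"
    unfolding 1 2 3 by (simp add: sum.distrib sum_distrib_left)
qed

lemma bp_zero: "bar_proj sc D (\<lambda>h. 0) = (\<lambda>b. 0)"
  by (rule ext) (simp add: bp_formula)

lemma bp_gvec:
  assumes "finite F" "g1 \<in> F"
  shows "(\<Sum>g\<in>{g\<in>F. barg sc D g = b}. gvec g1 g) = gvec (barg sc D g1) b"
proof -
  have "(\<Sum>g\<in>{g\<in>F. barg sc D g = b}. gvec g1 g) = (\<Sum>g\<in>{g\<in>F. barg sc D g = b}. if g = g1 then 1 else 0)"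
    by (simp add: gvec_def)
  also have "\<dots> = (if g1 \<in> {g\<in>F. barg sc D g = b} then 1 else 0)"
    by (rule sum.delta) (use assms in simp)
  finally show ?thesis using assms by (auto simp: gvec_def)
qed

lemma gvec_out: "h \<noteq> g \<Longrightarrow> gvec g h = 0" by (simp add: gvec_def)
lemma supp2: "f 0 0 = 0 \<Longrightarrow> supp (\<lambda>h. f (gvec g1 h) (gvec g2 h)) \<subseteq> {g1, g2}"
proof
  fix h assume f: "f 0 0 = 0" and "h \<in> supp (\<lambda>h. f (gvec g1 h) (gvec g2 h))"
  then have *: "f (gvec g1 h) (gvec g2 h) \<noteq> 0" by simp
  show "h \<in> {g1, g2}"
  proof (rule ccontr)
    assume "h \<notin> {g1, g2}"
    then have z: "gvec g1 h = 0" "gvec g2 h = 0" by (auto intro: gvec_out)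
    from * show False by (simp add: z f)
  qed
qed
lemma supp3: "f 0 0 0 = 0 \<Longrightarrow> supp (\<lambda>h. f (gvec g1 h) (gvec g2 h) (gvec g3 h)) \<subseteq> {g1, g2, g3}"
proof
  fix h assume f: "f 0 0 0 = 0" and "h \<in> supp (\<lambda>h. f (gvec g1 h) (gvec g2 h) (gvec g3 h))"
  then have *: "f (gvec g1 h) (gvec g2 h) (gvec g3 h) \<noteq> 0" by simp
  show "h \<in> {g1, g2, g3}"
  proof (rule ccontr)
    assume "h \<notin> {g1, g2, g3}"
    then have z: "gvec g1 h = 0" "gvec g2 h = 0" "gvec g3 h = 0" by (auto intro: gvec_out)
    from * show False by (simp add: z f)
  qed
qed

lemma bp3: "bar_proj sc D (\<lambda>h. gvec g1 h - gvec g2 h - gvec g3 h)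
   = (\<lambda>b. gvec (barg sc D g1) b - gvec (barg sc D g2) b - gvec (barg sc D g3) b)"
proof
  fix b
  let ?F = "{g1, g2, g3}" let ?G = "{g\<in>?F. barg sc D g = b}"
  have f: "finite ?F" by simp
  have "bar_proj sc D (\<lambda>h. gvec g1 h - gvec g2 h - gvec g3 h) b = (\<Sum>g\<in>?G. gvec g1 g - gvec g2 g - gvec g3 g)"
    by (rule bp_F[OF f supp3[of "\<lambda>a b c. a - b - c"]]) simp
  also have "\<dots> = (\<Sum>g\<in>?G. gvec g1 g) - (\<Sum>g\<in>?G. gvec g2 g) - (\<Sum>g\<in>?G. gvec g3 g)"
    by (simp only: sum_subtractf)
  also have "\<dots> = gvec (barg sc D g1) b - gvec (barg sc D g2) b - gvec (barg sc D g3) b"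
    by (simp only: bp_gvec[OF f insertI1] bp_gvec[OF f insertI2[OF insertI1]] bp_gvec[OF f insertI2[OF insertI2[OF singletonI]]])
  finally show "bar_proj sc D (\<lambda>h. gvec g1 h - gvec g2 h - gvec g3 h) b = gvec (barg sc D g1) b - gvec (barg sc D g2) b - gvec (barg sc D g3) b" .
qed

lemma bp2c: "bar_proj sc D (\<lambda>h. gvec g1 h - c * gvec g2 h)
   = (\<lambda>b. gvec (barg sc D g1) b - c * gvec (barg sc D g2) b)"
proof
  fix b
  let ?F = "{g1, g2}" let ?G = "{g\<in>?F. barg sc D g = b}"
  have f: "finite ?F" by simp
  have "bar_proj sc D (\<lambda>h. gvec g1 h - c * gvec g2 h) b = (\<Sum>g\<in>?G. gvec g1 g - c * gvec g2 g)"
    by (rule bp_F[OF f supp2[of "\<lambda>a b. a - c * b"]]) simp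
  also have "\<dots> = (\<Sum>g\<in>?G. gvec g1 g) - c * (\<Sum>g\<in>?G. gvec g2 g)"
    by (simp only: sum_subtractf sum_distrib_left)
  also have "\<dots> = gvec (barg sc D g1) b - c * gvec (barg sc D g2) b"
    by (simp only: bp_gvec[OF f insertI1] bp_gvec[OF f insertI2[OF singletonI]])
  finally show "bar_proj sc D (\<lambda>h. gvec g1 h - c * gvec g2 h) b = gvec (barg sc D g1) b - c * gvec (barg sc D g2) b" .
qed

lemma bp2p: "bar_proj sc D (\<lambda>h. gvec g1 h + gvec g2 h)
   = (\<lambda>b. gvec (barg sc D g1) b + gvec (barg sc D g2) b)"
proof
  fix b
  let ?F = "{g1, g2}" let ?G = "{g\<in>?F. barg sc D g = b}"
  have f: "finite ?F" by simp
  have "bar_proj sc D (\<lambda>h. gvec g1 h + gvec g2 h) b = (\<Sum>g\<in>?G. gvec g1 g + gvec g2 g)"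
    by (rule bp_F[OF f supp2[of "\<lambda>a b. a + b"]]) simp
  also have "\<dots> = (\<Sum>g\<in>?G. gvec g1 g) + (\<Sum>g\<in>?G. gvec g2 g)"
    by (simp only: sum.distrib)
  also have "\<dots> = gvec (barg sc D g1) b + gvec (barg sc D g2) b"
    by (simp only: bp_gvec[OF f insertI1] bp_gvec[OF f insertI2[OF singletonI]])
  finally show "bar_proj sc D (\<lambda>h. gvec g1 h + gvec g2 h) b = gvec (barg sc D g1) b + gvec (barg sc D g2) b" .
qed



context tset begin

lemma tc_self: "a \<in> tor_cls sc D a"
  by (simp add: tor_cls_def tor_zero)

lemma tc_eq: "is_torsion sc D (a - b) \<Longrightarrow> tor_cls sc D a = tor_cls sc D b"
proof -
  assume t: "is_torsion sc D (a - b)"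
  have "is_torsion sc D (x - a) \<longleftrightarrow> is_torsion sc D (x - b)" for x
  proof
    assume "is_torsion sc D (x - a)"
    from tor_add[OF this t] show "is_torsion sc D (x - b)" by (simp add: algebra_simps)
  next
    assume "is_torsion sc D (x - b)"
    from tor_diff[OF this t] show "is_torsion sc D (x - a)" by (simp add: algebra_simps)
  qed
  then show ?thesis by (auto simp: tor_cls_def)
qed

lemma tc_eq_iff: "tor_cls sc D a = tor_cls sc D b \<longleftrightarrow> is_torsion sc D (a - b)"
proof
  assume "tor_cls sc D a = tor_cls sc D b"
  then have "a \<in> tor_cls sc D b" using tc_self[of a] by simp
  then show "is_torsion sc D (a - b)" by (simp add: tor_cls_def)
qed (rule tc_eq)

lemma tc_mem: "x' \<in> tor_cls sc D x \<Longrightarrow> tor_cls sc D x' = tor_cls sc D x"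
  by (rule tc_eq) (simp add: tor_cls_def)

lemma bar_add_tc: "bar_add sc D (tor_cls sc D x) (tor_cls sc D y) = tor_cls sc D (x + y)"
proof -
  have "tor_cls sc D (x' + y') = tor_cls sc D (x + y)"
    if "x' \<in> tor_cls sc D x" "y' \<in> tor_cls sc D y" for x' y'
  proof (rule tc_eq)
    have "is_torsion sc D ((x' - x) + (y' - y))"
      using that by (intro tor_add) (auto simp: tor_cls_def)
    then show "is_torsion sc D (x' + y' - (x + y))" by (simp add: algebra_simps)
  qed
  then show ?thesis unfolding bar_add_def using tc_self[of x] tc_self[of y] by blast
qed

lemma bar_scale_tc: "bar_scale sc D c (tor_cls sc D x) = tor_cls sc D (sc c x)"
proof -
  have "tor_cls sc D (sc c x') = tor_cls sc D (sc c x)"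
    if "x' \<in> tor_cls sc D x" for x'
  proof (rule tc_eq)
    have "is_torsion sc D (sc c (x' - x))"
      using that by (intro tor_sc) (auto simp: tor_cls_def)
    then show "is_torsion sc D (sc c x' - sc c x)" by (simp add: scale_right_diff_distrib)
  qed
  then show ?thesis unfolding bar_scale_def using tc_self[of x] by blast
qed

lemma D_diff: "D (x - y) = D x - D y"
  using D_add[of "x - y" y] by (simp add: algebra_simps)

lemma bar_D_tc: "bar_D sc D (tor_cls sc D x) = tor_cls sc D (D x)"
proof -
  have "tor_cls sc D (D x') = tor_cls sc D (D x)"
    if "x' \<in> tor_cls sc D x" for x'
  proof (rule tc_eq)
    have "is_torsion sc D (D (x' - x))"
      using that by (intro tor_D) (auto simp: tor_cls_def)
    then show "is_torsion sc D (D x' - D x)" by (simp add: D_diff)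
  qed
  then show ?thesis unfolding bar_D_def using tc_self[of x] by blast
qed

end

definition rep :: "('f::field \<Rightarrow> 'a::ab_group_add \<Rightarrow> 'a) \<Rightarrow> ('a \<Rightarrow> 'a) \<Rightarrow> 'a set \<Rightarrow> 'a" where
  "rep sc D X = (SOME a. X = tor_cls sc D a)"

lemma tc_rep: "X \<in> range (tor_cls sc D) \<Longrightarrow> tor_cls sc D (rep sc D X) = X"
  unfolding rep_def by (rule someI_ex[where P="\<lambda>a. X = tor_cls sc D a", THEN sym]) auto

lemma map_rep: "set bs \<subseteq> range (tor_cls sc D) \<Longrightarrow> map (tor_cls sc D) (map (rep sc D) bs) = bs"
  by (induction bs) (auto simp: tc_rep)

lemma perm_list_map:
  assumes "\<sigma> permutes {..<k}" "length as = k"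
  shows "map f (perm_list k \<sigma> as) = perm_list k \<sigma> (map f as)"
proof -
  have "\<sigma> i < k" if "i < k" for i using permutes_in_image[OF assms(1)] that by simp
  then show ?thesis unfolding perm_list_def using assms(2) by auto
qed

lemma length_perm_list: "length (perm_list k \<sigma> as) = k"
  by (simp add: perm_list_def)

lemma hom_ok_perm:
  assumes "\<sigma> permutes {..<k}" "hom_ok k \<phi>"
  shows "hom_ok k (perm_pull \<sigma> \<phi>)"
  unfolding hom_ok_def perm_pull_def
proof (intro allI impI)
  fix e :: "nat \<Rightarrow> nat" assume "\<exists>j\<ge>k. e j \<noteq> 0"
  then obtain j where j: "j \<ge> k" "e j \<noteq> 0" by blast
  have "\<sigma> j = j" using permutes_not_in[OF assms(1)] j by simp
  then have "inv \<sigma> j = j" using permutes_inverses(2)[OF assms(1), of j] by simp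
  then have "(e \<circ> inv \<sigma>) j \<noteq> 0" using j by simp
  then show "\<phi> (e \<circ> inv \<sigma>) = 0" using assms(2) j(1) unfolding hom_ok_def by blast
qed


lemma hom_ok_add_gen:
  fixes \<phi> \<psi> :: "(nat \<Rightarrow> nat) \<Rightarrow> 'm::monoid_add"
  assumes "hom_ok k \<phi>" "hom_ok k \<psi>" shows "hom_ok k (\<lambda>e. \<phi> e + \<psi> e)"
  unfolding hom_ok_def
proof (intro allI impI)
  fix e :: "nat \<Rightarrow> nat" assume "\<exists>j\<ge>k. e j \<noteq> 0"
  then have "\<phi> e = 0" "\<psi> e = 0" using assms unfolding hom_ok_def by blast+
  then show "\<phi> e + \<psi> e = 0" by simp
qed

context cset begin

abbreviation "TC \<equiv> tor_cls sc D"
abbreviation "Rb \<equiv> chain_rels k (range TC) (bar_add sc D) (bar_scale sc D) (bar_D sc D) scM"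
abbreviation "Sb \<equiv> chain_span k (range TC) (bar_add sc D) (bar_scale sc D) (bar_D sc D) scM"
abbreviation "RA \<equiv> chain_rels k UNIV (+) sc D scM"

lemma barg_pair: "barg sc D (as, \<phi>) = (map TC as, \<phi>)"
  by (simp add: barg_def)

lemma gd_bar: "(as, \<phi>) \<in> gen_dom k UNIV \<Longrightarrow> (map TC as, \<phi>) \<in> gen_dom k (range TC)"
  by (auto simp: gen_dom_def)

lemma rel_bar:
  assumes "r \<in> RA"
  shows "bar_proj sc D r \<in> Rb"
  using assms
proof cases
  case (add_left as \<phi> i x y)
  have "(\<lambda>h. gvec ((map TC as)[i := bar_add sc D (TC x) (TC y)], \<phi>) h - gvec ((map TC as)[i := TC x], \<phi>) h - gvec ((map TC as)[i := TC y], \<phi>) h) \<in> Rb"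
    by (rule chain_rels.add_left) (use add_left in \<open>auto simp: gen_dom_def\<close>)
  then show ?thesis using add_left by (simp add: bp3 barg_pair bar_add_tc map_update)
next
  case (scale_left as \<phi> i x c)
  have "(\<lambda>h. gvec ((map TC as)[i := bar_scale sc D c (TC x)], \<phi>) h - c * gvec ((map TC as)[i := TC x], \<phi>) h) \<in> Rb"
    by (rule chain_rels.scale_left) (use scale_left in \<open>auto simp: gen_dom_def\<close>)
  then show ?thesis using scale_left by (simp add: bp2c barg_pair bar_scale_tc map_update)
next
  case (add_right as \<phi> \<psi>)
  have "(\<lambda>h. gvec (map TC as, \<lambda>e. \<phi> e + \<psi> e) h - gvec (map TC as, \<phi>) h - gvec (map TC as, \<psi>) h) \<in> Rb"
    by (rule chain_rels.add_right) (use add_right in \<open>auto simp: gen_dom_def\<close>)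
  then show ?thesis using add_right by (simp add: bp3 barg_pair)
next
  case (scale_right as \<phi> c)
  have "(\<lambda>h. gvec (map TC as, \<lambda>e. scM c (\<phi> e)) h - c * gvec (map TC as, \<phi>) h) \<in> Rb"
    by (rule chain_rels.scale_right) (use scale_right in \<open>auto simp: gen_dom_def\<close>)
  then show ?thesis using scale_right by (simp add: bp2c barg_pair)
next
  case (C1 as \<phi> i)
  have "(\<lambda>h. gvec ((map TC as)[i := bar_D sc D ((map TC as) ! i)], \<phi>) h + gvec (map TC as, lam_pull i \<phi>) h) \<in> Rb"
    by (rule chain_rels.C1) (use C1 in \<open>auto simp: gen_dom_def\<close>)
  moreover have "i < length as" using C1 by (simp add: gen_dom_def)
  ultimately show ?thesis using C1 by (simp add: bp2p barg_pair bar_D_tc map_update)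
next
  case (C2 as \<phi> \<sigma>)
  have "(\<lambda>h. gvec (perm_list k \<sigma> (map TC as), perm_pull \<sigma> \<phi>) h - of_int (sign \<sigma>) * gvec (map TC as, \<phi>) h) \<in> Rb"
    by (rule chain_rels.C2) (use C2 in \<open>auto simp: gen_dom_def\<close>)
  moreover have "map TC (perm_list k \<sigma> as) = perm_list k \<sigma> (map TC as)"
    using C2 by (intro perm_list_map) (auto simp: gen_dom_def)
  ultimately show ?thesis using C2 by (simp add: bp2c barg_pair)
qed


lemma rel_supp:
  assumes "r \<in> RA"
  shows "finite (supp r) \<and> supp r \<subseteq> gen_dom k UNIV"
  using assms
proof cases
  case (add_left as \<phi> i x y)
  have "supp r \<subseteq> {(as[i := x + y], \<phi>), (as[i := x], \<phi>), (as[i := y], \<phi>)}"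
    unfolding add_left(1) by (rule supp3[of "\<lambda>a b c. a - b - c"]) simp
  moreover have "{(as[i := x + y], \<phi>), (as[i := x], \<phi>), (as[i := y], \<phi>)} \<subseteq> gen_dom k UNIV"
    using add_left by (auto simp: gen_dom_def)
  ultimately show ?thesis by (meson finite.emptyI finite.insertI finite_subset subset_trans)
next
  case (scale_left as \<phi> i x c)
  have "supp r \<subseteq> {(as[i := sc c x], \<phi>), (as[i := x], \<phi>)}"
    unfolding scale_left(1) by (rule supp2[of "\<lambda>a b. a - c * b"]) simp
  moreover have "{(as[i := sc c x], \<phi>), (as[i := x], \<phi>)} \<subseteq> gen_dom k UNIV"
    using scale_left by (auto simp: gen_dom_def)
  ultimately show ?thesis by (meson finite.emptyI finite.insertI finite_subset subset_trans)
next
  case (add_right as \<phi> \<psi>)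
  have "supp r \<subseteq> {(as, \<lambda>e. \<phi> e + \<psi> e), (as, \<phi>), (as, \<psi>)}"
    unfolding add_right(1) by (rule supp3[of "\<lambda>a b c. a - b - c"]) simp
  moreover have "{(as, \<lambda>e. \<phi> e + \<psi> e), (as, \<phi>), (as, \<psi>)} \<subseteq> gen_dom k UNIV"
    using add_right by (auto simp: gen_dom_def intro: hom_ok_add_gen)
  ultimately show ?thesis by (meson finite.emptyI finite.insertI finite_subset subset_trans)
next
  case (scale_right as \<phi> c)
  have "supp r \<subseteq> {(as, \<lambda>e. scM c (\<phi> e)), (as, \<phi>)}"
    unfolding scale_right(1) by (rule supp2[of "\<lambda>a b. a - c * b"]) simp
  moreover have "{(as, \<lambda>e. scM c (\<phi> e)), (as, \<phi>)} \<subseteq> gen_dom k UNIV"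
    using scale_right by (auto simp: gen_dom_def hom_ok_def)
  ultimately show ?thesis by (meson finite.emptyI finite.insertI finite_subset subset_trans)
next
  case (C1 as \<phi> i)
  have "supp r \<subseteq> {(as[i := D (as ! i)], \<phi>), (as, lam_pull i \<phi>)}"
    unfolding C1(1) by (rule supp2[of "\<lambda>a b. a + b"]) simp
  moreover have "{(as[i := D (as ! i)], \<phi>), (as, lam_pull i \<phi>)} \<subseteq> gen_dom k UNIV"
    using C1 by (auto simp: gen_dom_def intro: hom_ok_lam)
  ultimately show ?thesis by (meson finite.emptyI finite.insertI finite_subset subset_trans)
next
  case (C2 as \<phi> \<sigma>)
  have "supp r \<subseteq> {(perm_list k \<sigma> as, perm_pull \<sigma> \<phi>), (as, \<phi>)}"
    unfolding C2(1) by (rule supp2[of "\<lambda>a b. a - of_int (sign \<sigma>) * b"]) simp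
  moreover have "{(perm_list k \<sigma> as, perm_pull \<sigma> \<phi>), (as, \<phi>)} \<subseteq> gen_dom k UNIV"
    using C2 by (auto simp: gen_dom_def length_perm_list intro: hom_ok_perm)
  ultimately show ?thesis by (meson finite.emptyI finite.insertI finite_subset subset_trans)
qed

lemma rel_lift:
  assumes "r \<in> Rb"
  shows "\<exists>r' \<in> RA. bar_proj sc D r' = r"
  using assms
proof cases
  case (add_left bs \<phi> i X Y)
  let ?as = "map (rep sc D) bs"
  have m: "map TC ?as = bs" using add_left by (intro map_rep) (auto simp: gen_dom_def)
  have X: "TC (rep sc D X) = X" "TC (rep sc D Y) = Y" using add_left by (simp_all add: tc_rep)
  have "(\<lambda>h. gvec (?as[i := rep sc D X + rep sc D Y], \<phi>) h - gvec (?as[i := rep sc D X], \<phi>) h - gvec (?as[i := rep sc D Y], \<phi>) h) \<in> RA"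
    by (rule chain_rels.add_left) (use add_left in \<open>auto simp: gen_dom_def\<close>)
  moreover have "bar_proj sc D (\<lambda>h. gvec (?as[i := rep sc D X + rep sc D Y], \<phi>) h - gvec (?as[i := rep sc D X], \<phi>) h - gvec (?as[i := rep sc D Y], \<phi>) h) = r"
    unfolding bp3 barg_pair map_update m bar_add_tc[symmetric] X add_left(1) ..
  ultimately show ?thesis by blast
next
  case (scale_left bs \<phi> i X c)
  let ?as = "map (rep sc D) bs"
  have m: "map TC ?as = bs" using scale_left by (intro map_rep) (auto simp: gen_dom_def)
  have X: "TC (rep sc D X) = X" using scale_left by (simp_all add: tc_rep)
  have "(\<lambda>h. gvec (?as[i := sc c (rep sc D X)], \<phi>) h - c * gvec (?as[i := rep sc D X], \<phi>) h) \<in> RA"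
    by (rule chain_rels.scale_left) (use scale_left in \<open>auto simp: gen_dom_def\<close>)
  moreover have "bar_proj sc D (\<lambda>h. gvec (?as[i := sc c (rep sc D X)], \<phi>) h - c * gvec (?as[i := rep sc D X], \<phi>) h) = r"
    unfolding bp2c barg_pair map_update m bar_scale_tc[symmetric] X scale_left(1) ..
  ultimately show ?thesis by blast
next
  case (add_right bs \<phi> \<psi>)
  let ?as = "map (rep sc D) bs"
  have m: "map TC ?as = bs" using add_right by (intro map_rep) (auto simp: gen_dom_def)
  have "(\<lambda>h. gvec (?as, \<lambda>e. \<phi> e + \<psi> e) h - gvec (?as, \<phi>) h - gvec (?as, \<psi>) h) \<in> RA"
    by (rule chain_rels.add_right) (use add_right in \<open>auto simp: gen_dom_def\<close>)
  moreover have "bar_proj sc D (\<lambda>h. gvec (?as, \<lambda>e. \<phi> e + \<psi> e) h - gvec (?as, \<phi>) h - gvec (?as, \<psi>) h) = r"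
    unfolding bp3 barg_pair m add_right(1) ..
  ultimately show ?thesis by blast
next
  case (scale_right bs \<phi> c)
  let ?as = "map (rep sc D) bs"
  have m: "map TC ?as = bs" using scale_right by (intro map_rep) (auto simp: gen_dom_def)
  have "(\<lambda>h. gvec (?as, \<lambda>e. scM c (\<phi> e)) h - c * gvec (?as, \<phi>) h) \<in> RA"
    by (rule chain_rels.scale_right) (use scale_right in \<open>auto simp: gen_dom_def\<close>)
  moreover have "bar_proj sc D (\<lambda>h. gvec (?as, \<lambda>e. scM c (\<phi> e)) h - c * gvec (?as, \<phi>) h) = r"
    unfolding bp2c barg_pair m scale_right(1) ..
  ultimately show ?thesis by blast
next
  case (C1 bs \<phi> i)
  let ?as = "map (rep sc D) bs"
  have m: "map TC ?as = bs" using C1 by (intro map_rep) (auto simp: gen_dom_def)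
  have il: "i < length ?as" using C1 by (simp add: gen_dom_def)
  have d: "TC (D (?as ! i)) = bar_D sc D (bs ! i)"
    using bar_D_tc[of "?as ! i"] nth_map[OF il, of TC] m by simp
  have "(\<lambda>h. gvec (?as[i := D (?as ! i)], \<phi>) h + gvec (?as, lam_pull i \<phi>) h) \<in> RA"
    by (rule chain_rels.C1) (use C1 in \<open>auto simp: gen_dom_def\<close>)
  moreover have "bar_proj sc D (\<lambda>h. gvec (?as[i := D (?as ! i)], \<phi>) h + gvec (?as, lam_pull i \<phi>) h) = r"
    unfolding bp2p barg_pair map_update m d C1(1) ..
  ultimately show ?thesis by blast
next
  case (C2 bs \<phi> \<sigma>)
  let ?as = "map (rep sc D) bs"
  have m: "map TC ?as = bs" using C2 by (intro map_rep) (auto simp: gen_dom_def)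
  have pm: "map TC (perm_list k \<sigma> ?as) = perm_list k \<sigma> bs"
    using C2 perm_list_map[of \<sigma> k ?as TC] m by (simp add: gen_dom_def)
  have "(\<lambda>h. gvec (perm_list k \<sigma> ?as, perm_pull \<sigma> \<phi>) h - of_int (sign \<sigma>) * gvec (?as, \<phi>) h) \<in> RA"
    by (rule chain_rels.C2) (use C2 in \<open>auto simp: gen_dom_def\<close>)
  moreover have "bar_proj sc D (\<lambda>h. gvec (perm_list k \<sigma> ?as, perm_pull \<sigma> \<phi>) h - of_int (sign \<sigma>) * gvec (?as, \<phi>) h) = r"
    unfolding bp2c barg_pair pm m C2(1) ..
  ultimately show ?thesis by blast
qed


lemma lin5: "((a::'f::field) - l) - (l' - l - t) - t = a - l'" by algebra

lemma span_bar:
  assumes "x \<in> S"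
  shows "finite (supp x) \<and> supp x \<subseteq> gen_dom k UNIV \<and> bar_proj sc D x \<in> Sb"
  using assms
proof (induction rule: chain_span.induct)
  case zero
  then show ?case by (simp add: bp_zero chain_span.zero)
next
  case (step x r c)
  have fr: "finite (supp r) \<and> supp r \<subseteq> gen_dom k UNIV" by (rule rel_supp[OF step.hyps(2)])
  have sub: "supp (\<lambda>h. x h + c * r h) \<subseteq> supp x \<union> supp r" by auto
  have "bar_proj sc D (\<lambda>h. x h + c * r h) = (\<lambda>b. bar_proj sc D x b + c * bar_proj sc D r b)"
    using step.IH fr by (intro bp_lin) auto
  moreover have "(\<lambda>b. bar_proj sc D x b + c * bar_proj sc D r b) \<in> Sb"
    by (rule chain_span.step[OF _ rel_bar[OF step.hyps(2)]]) (use step.IH in auto)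
  ultimately show ?case using sub step.IH fr by (auto intro: finite_subset)
qed

lemma span_lift:
  assumes "y \<in> Sb"
  shows "\<exists>z\<in>S. bar_proj sc D z = y"
  using assms
proof (induction rule: chain_span.induct)
  case zero
  show ?case by (intro bexI[of _ "\<lambda>h. 0"]) (simp_all add: bp_zero chain_span.zero)
next
  case (step y r c)
  obtain z where z: "z \<in> S" "bar_proj sc D z = y" using step.IH by blast
  obtain r' where r': "r' \<in> RA" "bar_proj sc D r' = r" using rel_lift[OF step.hyps(2)] by blast
  have "(\<lambda>h. z h + c * r' h) \<in> S" by (rule chain_span.step[OF z(1) r'(1)])
  moreover have "bar_proj sc D (\<lambda>h. z h + c * r' h) = (\<lambda>h. y h + c * r h)"
    using span_bar[OF z(1)] rel_supp[OF r'(1)] z(2) r'(2) by (simp add: bp_lin)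
  ultimately show ?case by blast
qed

lemma pair:
  assumes "length as = k" "length as' = k" "hom_ok k \<phi>" "map TC as = map TC as'"
  shows "(\<lambda>h. gvec (as, \<phi>) h - gvec (as', \<phi>) h) \<in> S"
proof -
  define l where "l m = take m as' @ drop m as" for m
  have ll: "length (l m) = k" if "m \<le> k" for m using that assms by (simp add: l_def)
  have lnth: "l m ! j = (if j < m then as' ! j else as ! j)" if "m \<le> k" "j < k" for m j
    using that assms by (auto simp: l_def nth_append)
  have "(\<lambda>h. gvec (as, \<phi>) h - gvec (l m, \<phi>) h) \<in> S" if "m \<le> k" for m
    using that
  proof (induction m)
    case 0
    have "l 0 = as" by (simp add: l_def)
    then show ?case by (intro cs_eq[OF chain_span.zero]) auto
  next
    case (Suc m)
    then have mk: "m < k" "m \<le> k" by auto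
    let ?L = "l m" let ?y = "as' ! m - as ! m"
    have IH: "(\<lambda>h. gvec (as, \<phi>) h - gvec (?L, \<phi>) h) \<in> S" using Suc mk by simp
    have r0: "(\<lambda>h. gvec (?L[m := as ! m + ?y], \<phi>) h - gvec (?L[m := as ! m], \<phi>) h - gvec (?L[m := ?y], \<phi>) h) \<in> S"
      by (rule cs_rel, rule chain_rels.add_left) (use ll[OF mk(2)] mk assms in \<open>auto simp: gen_dom_def\<close>)
    have e1: "?L[m := as ! m + ?y] = l (Suc m)"
      by (rule nth_equalityI) (use ll[OF mk(2)] ll[OF Suc.prems] mk Suc.prems in \<open>auto simp: lnth nth_list_update\<close>)
    have "?L ! m = as ! m" using lnth[OF mk(2) mk(1)] by simp
    then have e2: "?L[m := as ! m] = ?L"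
      by (metis list_update_id)
    have r: "(\<lambda>h. gvec (l (Suc m), \<phi>) h - gvec (?L, \<phi>) h - gvec (?L[m := ?y], \<phi>) h) \<in> S"
      using r0 by (simp only: e1 e2)
    have "TC (as ! m) = TC (as' ! m)"
      by (metis assms(1,2,4) mk(1) nth_map)
    then have "is_torsion sc D (as ! m - as' ! m)" by (simp add: tc_eq_iff)
    then have ty: "is_torsion sc D ?y" using tor_neg by fastforce
    have t: "gvec (?L[m := ?y], \<phi>) \<in> S"
      by (rule part1[of _ _ m]) (use ll[OF mk(2)] mk assms ty in auto)
    have X: "(\<lambda>h. (gvec (as, \<phi>) h - gvec (?L, \<phi>) h) - (gvec (l (Suc m), \<phi>) h - gvec (?L, \<phi>) h - gvec (?L[m := ?y], \<phi>) h) - gvec (?L[m := ?y], \<phi>) h) \<in> S"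
      by (rule cs_sub[OF cs_sub[OF IH r] t])
    then show ?case by (simp only: lin5)
  qed
  from this[of k] show ?thesis using assms by (simp add: l_def)
qed


lemma kernel:
  fixes w :: "('a list \<times> ((nat \<Rightarrow> nat) \<Rightarrow> 'm)) \<Rightarrow> 'f"
  assumes "finite (supp w)" "supp w \<subseteq> gen_dom k UNIV" "bar_proj sc D w = (\<lambda>b. 0)"
  shows "w \<in> S"
  using assms
proof (induction "card (supp w)" arbitrary: w rule: less_induct)
  case less
  show ?case
  proof (cases "supp w = {}")
    case True
    then have "w = (\<lambda>h. 0)" by auto
    then show ?thesis using chain_span.zero by simp
  next
    case False
    then obtain g where g: "w g \<noteq> 0" by auto
    let ?B = "barg sc D g"
    let ?G = "{g'. w g' \<noteq> 0 \<and> barg sc D g' = ?B}"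
    have "sum w ?G = 0" using less.prems(3) bp_formula[of sc D w ?B] by (metis)
    moreover have "g \<in> ?G" using g by simp
    ultimately have "?G \<noteq> {g}" using g by auto
    then obtain g' where g': "g' \<in> ?G" "g' \<noteq> g" using \<open>g \<in> ?G\<close> by blast
    define d :: "('a list \<times> ((nat \<Rightarrow> nat) \<Rightarrow> 'm)) \<Rightarrow> 'f" where "d = (\<lambda>h. gvec g h - 1 * gvec g' h)"
    define w' where "w' = (\<lambda>h. w h + (- w g) * d h)"
    have gvg: "gvec g g = 1" "gvec g' g = 0" using g'(2) by (auto simp: gvec_def)
    have sw': "supp w' \<subseteq> supp w - {g}"
    proof
      fix h assume h: "h \<in> supp w'"
      show "h \<in> supp w - {g}"
      proof (cases "h = g")
        case True then show ?thesis using h by (simp add: w'_def d_def gvg)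
      next
        case False
        show ?thesis
        proof (cases "h = g'")
          case True then show ?thesis using g' False by simp
        next
          case False2: False
          have z: "gvec g h = 0" "gvec g' h = 0" using False False2 by (auto simp: gvec_def)
          show ?thesis using h False by (simp add: w'_def d_def z)
        qed
      qed
    qed
    have fin: "finite (supp w')" using sw' less.prems(1) by (auto intro: finite_subset)
    have "card (supp w') \<le> card (supp w - {g})"
      by (rule card_mono) (use less.prems(1) sw' in auto)
    also have "\<dots> < card (supp w)"
      using g less.prems(1) by (intro card_Diff1_less) auto
    finally have card: "card (supp w') < card (supp w)" .
    have fd: "finite (supp d)"
      using supp2[of "\<lambda>a b. a - 1 * b" g g'] by (auto simp: d_def intro: finite_subset)
    have bd: "bar_proj sc D d = (\<lambda>b. 0)"
      unfolding d_def bp2c using g' by simp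
    have bw': "bar_proj sc D w' = (\<lambda>b. 0)"
      unfolding w'_def bp_lin[OF less.prems(1) fd, of sc D "- w g"] less.prems(3) bd by simp
    have w'S: "w' \<in> S"
      using less.hyps[OF card fin _ bw'] sw' less.prems(2) by blast
    have gG: "g \<in> gen_dom k UNIV" "g' \<in> gen_dom k UNIV" using less.prems(2) g g' by auto
    obtain as \<phi> where gp: "g = (as, \<phi>)" by (cases g)
    obtain as' \<phi>' where gp': "g' = (as', \<phi>')" by (cases g')
    have "barg sc D g' = barg sc D g" using g' by simp
    then have eq: "\<phi>' = \<phi>" "map TC as' = map TC as" by (simp_all add: gp gp' barg_pair)
    have dS: "d \<in> S"
      using pair[of as as' \<phi>] gG eq unfolding d_def gp gp' by (simp add: gen_dom_def)
    have "(\<lambda>h. w' h + w g * d h) \<in> S" by (rule cs_add[OF w'S dS])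
    moreover have "(\<lambda>h. w' h + w g * d h) = w" by (simp add: w'_def algebra_simps)
    ultimately show ?thesis by simp
  qed
qed

end


lemma part3:
  fixes sc :: "'f::field \<Rightarrow> 'a::ab_group_add \<Rightarrow> 'a"
    and y :: "'a set list \<times> ((nat \<Rightarrow> nat) \<Rightarrow> 'm::zero) \<Rightarrow> 'f"
  assumes "free_elt k (range (tor_cls sc D)) y"
  shows "\<exists>x. free_elt k UNIV x \<and> bar_proj sc D x = y"
proof -
  let ?TC = "tor_cls sc D"
  let ?R = "map (rep sc D)"
  define x where "x = (\<lambda>(as, \<phi>). if as = ?R (map ?TC as) then y (map ?TC as, \<phi>) else 0)"
  have xs: "x (as, \<phi>) \<noteq> 0 \<longleftrightarrow> as = ?R (map ?TC as) \<and> y (map ?TC as, \<phi>) \<noteq> 0" for as \<phi>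
    by (simp add: x_def)
  have yfin: "finite (supp y)" and ygd: "supp y \<subseteq> gen_dom k (range ?TC)"
    using assms by (auto simp: free_elt_def)
  have sub: "supp x \<subseteq> (\<lambda>(bs, \<phi>). (?R bs, \<phi>)) ` supp y"
  proof
    fix g assume "g \<in> supp x"
    moreover obtain as \<phi> where g: "g = (as, \<phi>)" by (cases g)
    ultimately have "as = ?R (map ?TC as)" "y (map ?TC as, \<phi>) \<noteq> 0" using xs by auto
    then show "g \<in> (\<lambda>(bs, \<phi>). (?R bs, \<phi>)) ` supp y"
      unfolding g by (intro image_eqI[of _ _ "(map ?TC as, \<phi>)"]) auto
  qed
  have "free_elt k UNIV x"
    unfolding free_elt_def
  proof
    show "finite (supp x)" using sub yfin by (auto intro: finite_subset)
    show "supp x \<subseteq> gen_dom k UNIV"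
      using sub ygd by (fastforce simp: gen_dom_def)
  qed
  moreover have "bar_proj sc D x = y"
  proof
    fix b :: "'a set list \<times> ((nat \<Rightarrow> nat) \<Rightarrow> 'm)"
    obtain bs \<phi> where b: "b = (bs, \<phi>)" by (cases b)
    show "bar_proj sc D x b = y b"
    proof (cases "y b = 0")
      case True
      have e: "{g. x g \<noteq> 0 \<and> barg sc D g = b} = {}"
      proof (rule ccontr)
        assume "{g. x g \<noteq> 0 \<and> barg sc D g = b} \<noteq> {}"
        then obtain as \<psi> where "x (as, \<psi>) \<noteq> 0" "barg sc D (as, \<psi>) = b" by auto
        then show False using True xs by (auto simp: barg_def b)
      qed
      show ?thesis unfolding bp_formula e using True by simp
    next
      case False
      then have "(bs, \<phi>) \<in> gen_dom k (range ?TC)" using ygd b by auto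
      then have m: "map ?TC (?R bs) = bs" by (intro map_rep) (auto simp: gen_dom_def)
      have xv: "x (?R bs, \<phi>) = y (bs, \<phi>)" unfolding x_def prod.case m by simp
      have se: "{g. x g \<noteq> 0 \<and> barg sc D g = b} = {(?R bs, \<phi>)}"
      proof (intro equalityI subsetI)
        fix g assume g: "g \<in> {g. x g \<noteq> 0 \<and> barg sc D g = b}"
        obtain as \<psi> where gp: "g = (as, \<psi>)" by (cases g)
        have "map ?TC as = bs" "\<psi> = \<phi>" using g by (auto simp: gp barg_def b)
        moreover have "as = ?R (map ?TC as)" using g xs gp by auto
        ultimately show "g \<in> {(?R bs, \<phi>)}" using gp by simp
      next
        fix g assume "g \<in> {(?R bs, \<phi>)}"
        then have gg: "g = (?R bs, \<phi>)" by simp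
        have bg: "barg sc D (?R bs, \<phi>) = b" unfolding barg_def fst_conv snd_conv m b ..
        show "g \<in> {g. x g \<noteq> 0 \<and> barg sc D g = b}"
          unfolding gg using xv bg False b by simp
      qed
      show ?thesis unfolding bp_formula se using xv b by simp
    qed
  qed
  ultimately show ?thesis by blast
qed

theorem lemma3p2:
  fixes sc :: "'f::field_char_0 \<Rightarrow> 'a::ab_group_add \<Rightarrow> 'a"
    and D :: "'a \<Rightarrow> 'a" and pr :: "'a \<Rightarrow> 'a \<Rightarrow> nat \<Rightarrow> 'a"
    and scM :: "'f \<Rightarrow> 'm::ab_group_add \<Rightarrow> 'm" and DM :: "'m \<Rightarrow> 'm"
    and act :: "'a \<Rightarrow> 'm \<Rightarrow> nat \<Rightarrow> 'm"
    and k :: nat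
  assumes "is_lca_module sc D pr scM DM act"
    and "k \<ge> 1"
  shows "(\<forall>as \<phi>. (as, \<phi>) \<in> gen_dom k UNIV \<and> (\<exists>i<k. is_torsion sc D (as ! i)) \<longrightarrow>
            gvec (as, \<phi>) \<in> chain_span k UNIV (+) sc D scM)
       \<and> (\<forall>x. free_elt k UNIV x \<longrightarrow>
            (x \<in> chain_span k UNIV (+) sc D scM \<longleftrightarrow>
             bar_proj sc D x \<in> chain_span k (range (tor_cls sc D)) (bar_add sc D) (bar_scale sc D) (bar_D sc D) scM))
       \<and> (\<forall>y :: 'a set list \<times> ((nat \<Rightarrow> nat) \<Rightarrow> 'm) \<Rightarrow> 'f. free_elt k (range (tor_cls sc D)) y \<longrightarrow>
            (\<exists>x. free_elt k UNIV x \<and> bar_proj sc D x = y))"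
proof -
  have vs: "vector_space sc" and lin: "Vector_Spaces.linear sc sc D" and vsM: "vector_space scM"
    using assms(1) unfolding is_lca_module_def is_lca_def by auto
  interpret C: cset sc D scM k
    using vs lin vsM by (simp add: cset_def tset_def cset_axioms_def)
  have P1: "gvec (as, \<phi>) \<in> C.S" if "(as, \<phi>) \<in> gen_dom k UNIV" "\<exists>i<k. is_torsion sc D (as ! i)" for as \<phi>
    using that C.part1[of as \<phi>] by (auto simp: gen_dom_def)
  have P2: "x \<in> C.S \<longleftrightarrow> bar_proj sc D x \<in> C.Sb" if fx: "free_elt k UNIV x" for x
  proof
    assume "x \<in> C.S" then show "bar_proj sc D x \<in> C.Sb" using C.span_bar by blast
  next
    assume "bar_proj sc D x \<in> C.Sb"
    then obtain z where z: "z \<in> C.S" "bar_proj sc D z = bar_proj sc D x" using C.span_lift by blast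
    have zi: "finite (supp z)" "supp z \<subseteq> gen_dom k UNIV" using C.span_bar[OF z(1)] by auto
    have xi: "finite (supp x)" "supp x \<subseteq> gen_dom k UNIV" using fx by (auto simp: free_elt_def)
    define w where "w = (\<lambda>h. x h + (-1) * z h)"
    have "supp w \<subseteq> supp x \<union> supp z" by (auto simp: w_def)
    then have wi: "finite (supp w)" "supp w \<subseteq> gen_dom k UNIV" using zi xi by (auto intro: finite_subset)
    have "bar_proj sc D w = (\<lambda>b. 0)"
      unfolding w_def bp_lin[OF xi(1) zi(1)] z(2) by simp
    then have wS: "w \<in> C.S" using C.kernel[OF wi] by blast
    have "(\<lambda>h. w h + 1 * z h) \<in> C.S" by (rule cs_add[OF wS z(1)])
    moreover have "(\<lambda>h. w h + 1 * z h) = x" by (simp add: w_def)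
    ultimately show "x \<in> C.S" by simp
  qed
  show ?thesis using P1 P2 part3 by blast
qed


end
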